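(* Let $\vec B=(b_0,\dots,b_{N-1})$ be a binary digit vector with cumulative digit function $g$. Let $x\in(0,1)$ and write $x=\sum_{i=1}^\infty n_i N^{-i}$ with $n_i\in\{0,1,\dots,N-1\}$. Then $$F_{\vec B}(x)=\sum_{i=1}^\infty\Big(\prod_{k=1}^{i-1}b_{n_k}\Big)\frac{g(n_i)}{\|\vec B\|^i}.$$
   Context: A binary digit vector of length (scale factor) $N\ge3$ is $\vec B=(b_0,\dots,b_{N-1})\in\{0,1\}^N$ with $2\le\|\vec B\|:=\sum_i b_i\le N-1$; its digit set is $D=\{i:b_i=1\}$. With $\phi_d(x)=(x+d)/N$ for $d\in D$, let $\mu_{\vec B}$ be the unique Borel probability measure with $\mu_{\vec B}=\frac{1}{\|\vec B\|}\sum_{d\in D}\mu_{\vec B}\circ\phi_d^{-1}$, supported on the attractor $C_{\vec B}\subset[0,1]$. The CDF is $F_{\vec B}(x)=\mu_{\vec B}([0,x])$. The cumulative digit function is $g(0)=0$, $g(i)=\sum_{j=0}^{i-1}b_j$ for $1\le i\le N$. An empty product equals $1$. *)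

theory Defs
  imports "HOL-Probability.Probability"
begin

text \<open>A binary digit vector of length N is represented by b :: nat => nat,
  with b i \<in> {0,1} for i < N (values at i >= N are irrelevant).\<close>

definition digit_vector :: "nat \<Rightarrow> (nat \<Rightarrow> nat) \<Rightarrow> bool" where
  "digit_vector N b \<longleftrightarrow> 3 \<le> N \<and> (\<forall>i<N. b i \<in> {0,1})
     \<and> 2 \<le> (\<Sum>i<N. b i) \<and> (\<Sum>i<N. b i) \<le> N - 1"

definition digit_norm :: "nat \<Rightarrow> (nat \<Rightarrow> nat) \<Rightarrow> nat" where
  "digit_norm N b = (\<Sum>i<N. b i)"

definition digit_set :: "nat \<Rightarrow> (nat \<Rightarrow> nat) \<Rightarrow> nat set" where
  "digit_set N b = {i. i < N \<and> b i = 1}"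

definition cum_digit :: "(nat \<Rightarrow> nat) \<Rightarrow> nat \<Rightarrow> nat" where
  "cum_digit b i = (\<Sum>j<i. b j)"

definition phi :: "nat \<Rightarrow> nat \<Rightarrow> real \<Rightarrow> real" where
  "phi N d x = (x + real d) / real N"

definition self_similar_measure :: "nat \<Rightarrow> (nat \<Rightarrow> nat) \<Rightarrow> real measure \<Rightarrow> bool" where
  "self_similar_measure N b \<mu> \<longleftrightarrow> prob_space \<mu> \<and> sets \<mu> = sets borel \<and>
     (\<forall>A\<in>sets borel. measure \<mu> A =
        (1 / real (digit_norm N b)) * (\<Sum>d\<in>digit_set N b. measure \<mu> (phi N d -` A)))"

definition cdf_of :: "real measure \<Rightarrow> real \<Rightarrow> real" where
  "cdf_of \<mu> x = measure \<mu> {0..x}"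

end

theory Submission imports Defs begin

context
  fixes N :: nat and b :: "nat \<Rightarrow> nat" and \<mu> :: "real measure"
  assumes dv: "digit_vector N b" and ss: "self_similar_measure N b \<mu>"
begin

lemma ps: "prob_space \<mu>" and sets_mu: "sets \<mu> = sets borel"
  using ss unfolding self_similar_measure_def by auto

lemma ss_eq: "A \<in> sets borel \<Longrightarrow> measure \<mu> A =
   (1 / real (digit_norm N b)) * (\<Sum>d\<in>digit_set N b. measure \<mu> (phi N d -` A))"
  using ss unfolding self_similar_measure_def by auto

lemma N3: "3 \<le> N" and bvals: "i < N \<Longrightarrow> b i \<in> {0,1}" and m2: "2 \<le> digit_norm N b"
  using dv unfolding digit_vector_def digit_norm_def by auto

lemma finD: "finite (digit_set N b)" unfolding digit_set_def by auto

lemma cum_card: assumes "a \<le> N"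
  shows "real (cum_digit b a) = (\<Sum>d\<in>digit_set N b. if d < a then 1 else 0)"
proof -
  have "real (cum_digit b a) = (\<Sum>j<a. if b j = 1 then 1 else (0::real))"
    unfolding cum_digit_def of_nat_sum
  proof (rule sum.cong)
    fix x assume "x \<in> {..<a}"
    then have "b x \<in> {0,1}" using bvals assms by auto
    then show "real (b x) = (if b x = 1 then 1 else 0)" by auto
  qed simp
  also have "\<dots> = (\<Sum>j\<in>{j\<in>{..<a}. b j = 1}. 1)"
    using sum.inter_filter[of "{..<a}" "\<lambda>_. 1::real" "\<lambda>j. b j = 1"] by simp
  also have "{j\<in>{..<a}. b j = 1} = {d \<in> digit_set N b. d < a}" using assms by (auto simp: digit_set_def)
  also have "(\<Sum>j\<in>{d \<in> digit_set N b. d < a}. 1) = (\<Sum>d\<in>digit_set N b. if d < a then 1 else (0::real))"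
    using finD sum.inter_filter[of "digit_set N b" "\<lambda>_. 1::real" "\<lambda>j. j < a"] by simp
  finally show ?thesis .
qed

lemma m_card: "real (digit_norm N b) = (\<Sum>d\<in>digit_set N b. 1)"
proof -
  have "real (digit_norm N b) = real (cum_digit b N)" by (simp add: digit_norm_def cum_digit_def)
  also have "\<dots> = (\<Sum>d\<in>digit_set N b. 1)" using cum_card[of N] by (simp add: digit_set_def)
  finally show ?thesis .
qed

lemma b_ind: "a < N \<Longrightarrow> real (b a) = (if a \<in> digit_set N b then 1 else 0)"
  using bvals[of a] by (auto simp: digit_set_def)

definition Aout :: "real \<Rightarrow> real set" where "Aout t = {y. y < - t} \<union> {y. 1 + t < y}"

lemma Aout_borel[measurable]: "Aout t \<in> sets borel" unfolding Aout_def by measurable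

lemma Aout_pre: assumes "t \<ge> 0" "d \<in> digit_set N b"
  shows "phi N d -` Aout t \<subseteq> Aout (real N * t)"
proof
  fix y assume "y \<in> phi N d -` Aout t"
  then have h: "(y + d) / N < - t \<or> 1 + t < (y + d) / N" by (simp add: Aout_def phi_def)
  have Np: "real N > 0" using N3 by simp
  have dN: "real d + 1 \<le> real N" using assms(2) by (auto simp: digit_set_def)
  from h show "y \<in> Aout (real N * t)"
  proof
    assume "(y + d) / N < - t" then have "y + d < - (N * t)" using Np by (simp add: field_simps)
    then show ?thesis by (simp add: Aout_def)
  next
    assume "1 + t < (y + d) / N" then have "N + N * t < y + d" using Np by (simp add: field_simps)
    then show ?thesis using dN by (simp add: Aout_def)
  qed
qed

lemma Aout_step: assumes "t \<ge> 0" shows "measure \<mu> (Aout t) \<le> measure \<mu> (Aout (real N * t))"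
proof -
  interpret prob_space \<mu> by (rule ps)
  have "measure \<mu> (Aout t) = (1 / real (digit_norm N b)) * (\<Sum>d\<in>digit_set N b. measure \<mu> (phi N d -` Aout t))"
    by (rule ss_eq) simp
  also have "\<dots> \<le> (1 / real (digit_norm N b)) * (\<Sum>d\<in>digit_set N b. measure \<mu> (Aout (real N * t)))"
    apply (intro mult_left_mono sum_mono finite_measure_mono)
    using Aout_pre assms by (auto simp: sets_mu)
  also have "\<dots> = measure \<mu> (Aout (real N * t))" using m_card m2 by simp
  finally show ?thesis .
qed

lemma Aout_anti: "s \<le> s' \<Longrightarrow> Aout s' \<subseteq> Aout s" by (auto simp: Aout_def)

lemma Aout_pow: assumes "t \<ge> 0" shows "measure \<mu> (Aout t) \<le> measure \<mu> (Aout (real N ^ k * t))"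
proof (induction k)
  case 0 then show ?case by simp
next
  case (Suc k)
  have "measure \<mu> (Aout (real N ^ k * t)) \<le> measure \<mu> (Aout (real N * (real N ^ k * t)))"
    by (rule Aout_step) (use assms in simp)
  then show ?case using Suc by (simp add: mult.assoc)
qed

lemma Aout_pos_zero: assumes "t > 0" shows "measure \<mu> (Aout t) = 0"
proof -
  interpret prob_space \<mu> by (rule ps)
  define B where "B k = Aout (real N ^ k * t)" for k
  have N1: "1 < real N" using N3 by simp
  have dec: "decseq B" unfolding decseq_def B_def
  proof (intro allI impI Aout_anti)
    fix m n :: nat assume "m \<le> n"
    then have "real N ^ m \<le> real N ^ n" using N1 by (simp add: power_increasing)
    then show "real N ^ m * t \<le> real N ^ n * t" using assms by simp
  qed
  have "(\<Inter>k. B k) = {}"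
  proof (rule ccontr)
    assume "(\<Inter>k. B k) \<noteq> {}"
    then obtain y where y: "\<And>k. y \<in> B k" by blast
    obtain k where k: "\<bar>y\<bar> / t < real N ^ k" using real_arch_pow[OF N1] by blast
    then have "\<bar>y\<bar> < real N ^ k * t" using assms by (simp add: field_simps)
    then show False using y[of k] by (auto simp: B_def Aout_def)
  qed
  moreover have "range B \<subseteq> sets \<mu>" by (auto simp: B_def sets_mu)
  then have "(\<lambda>k. measure \<mu> (B k)) \<longlonglongrightarrow> measure \<mu> (\<Inter>k. B k)"
    using dec by (rule finite_Lim_measure_decseq)
  ultimately have lim: "(\<lambda>k. measure \<mu> (B k)) \<longlonglongrightarrow> 0" by simp
  have "measure \<mu> (Aout t) \<le> 0"
    by (rule LIMSEQ_le_const[OF lim]) (use Aout_pow assms in \<open>auto simp: B_def\<close>)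
  then show ?thesis by (simp add: measure_nonneg antisym)
qed

lemma Aout_zero: "measure \<mu> (Aout 0) = 0"
proof -
  interpret prob_space \<mu> by (rule ps)
  define B where "B k = Aout (inverse (real (Suc k)))" for k
  have inc: "incseq B" unfolding incseq_def B_def
    by (intro allI impI Aout_anti) (simp add: field_simps)
  have U: "(\<Union>k. B k) = Aout 0"
  proof
    show "(\<Union>k. B k) \<subseteq> Aout 0" unfolding B_def by (intro UN_least Aout_anti) simp
    show "Aout 0 \<subseteq> (\<Union>k. B k)"
    proof
      fix y assume "y \<in> Aout 0"
      then have "0 < - y \<or> 0 < y - 1" by (auto simp: Aout_def)
      then show "y \<in> (\<Union>k. B k)"
      proof
        assume "0 < - y" then obtain k where "inverse (real (Suc k)) < - y" using reals_Archimedean by blast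
        then have "y \<in> B k" by (auto simp: B_def Aout_def)
        then show ?thesis by blast
      next
        assume "0 < y - 1" then obtain k where "inverse (real (Suc k)) < y - 1" using reals_Archimedean by blast
        then have "y \<in> B k" by (auto simp: B_def Aout_def)
        then show ?thesis by blast
      qed
    qed
  qed
  have "range B \<subseteq> sets \<mu>" by (auto simp: B_def sets_mu)
  then have "(\<lambda>k. measure \<mu> (B k)) \<longlonglongrightarrow> measure \<mu> (\<Union>k. B k)"
    using inc by (rule finite_Lim_measure_incseq)
  moreover have "(\<lambda>k. measure \<mu> (B k)) = (\<lambda>k. 0)" unfolding B_def
    by (intro ext Aout_pos_zero) simp
  ultimately have "(\<lambda>k. 0::real) \<longlonglongrightarrow> measure \<mu> (Aout 0)" using U by simp
  then show ?thesis using LIMSEQ_unique tendsto_const by metis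
qed

lemma mu_sing0: "measure \<mu> {0} = 0"
proof -
  interpret prob_space \<mu> by (rule ps)
  have m0: "real (digit_norm N b) \<ge> 2" using m2 by simp
  have e: "measure \<mu> {0} = (1 / real (digit_norm N b)) * (\<Sum>d\<in>digit_set N b. measure \<mu> (phi N d -` {0}))"
    by (rule ss_eq) simp
  have "(\<Sum>d\<in>digit_set N b. measure \<mu> (phi N d -` {0})) \<le> (\<Sum>d\<in>digit_set N b. if d = 0 then measure \<mu> {0} else 0)"
  proof (rule sum_mono)
    fix d assume "d \<in> digit_set N b"
    have pre: "phi N d -` {0} = {- real d}" using N3 by (auto simp: phi_def)
    show "measure \<mu> (phi N d -` {0}) \<le> (if d = 0 then measure \<mu> {0} else 0)"
    proof (cases "d = 0")
      case True then show ?thesis using pre by simp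
    next
      case False
      then have "{- real d} \<subseteq> Aout 0" by (auto simp: Aout_def)
      then have "measure \<mu> {- real d} \<le> measure \<mu> (Aout 0)"
        by (intro finite_measure_mono) (auto simp: sets_mu)
      then show ?thesis using pre False Aout_zero by simp
    qed
  qed
  also have "(\<Sum>d\<in>digit_set N b. if d = 0 then measure \<mu> {0} else 0) \<le> measure \<mu> {0}"
    using finD by (simp add: sum.delta)
  finally have S: "(\<Sum>d\<in>digit_set N b. measure \<mu> (phi N d -` {0})) \<le> measure \<mu> {0}" .
  have "measure \<mu> {0} = (\<Sum>d\<in>digit_set N b. measure \<mu> (phi N d -` {0})) / real (digit_norm N b)"
    using e by simp
  also have "\<dots> \<le> measure \<mu> {0} / real (digit_norm N b)"
    by (rule divide_right_mono[OF S]) simp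
  finally have "measure \<mu> {0} \<le> measure \<mu> {0} / real (digit_norm N b)" .
  then have h1: "measure \<mu> {0} * real (digit_norm N b) \<le> measure \<mu> {0}" using m0 by (simp add: le_divide_eq)
  have nn: "0 \<le> measure \<mu> {0}" by (rule measure_nonneg)
  have "measure \<mu> {0} * 1 \<le> measure \<mu> {0} * (real (digit_norm N b) - 1)"
    by (rule mult_left_mono) (use m0 nn in auto)
  also have "\<dots> \<le> 0" using h1 by (simp add: algebra_simps)
  finally have "measure \<mu> {0} \<le> 0" by simp
  then show ?thesis by (simp add: measure_nonneg antisym)
qed

lemma mu01: "measure \<mu> {0..1} = 1"
proof -
  interpret prob_space \<mu> by (rule ps)
  have sp: "space \<mu> = UNIV" using sets_mu sets_eq_imp_space_eq by fastforce
  have "1 = measure \<mu> UNIV" using prob_space sp by simp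
  also have "\<dots> \<le> measure \<mu> ({0..1} \<union> Aout 0)"
    by (rule finite_measure_mono) (auto simp: Aout_def sets_mu)
  also have "\<dots> \<le> measure \<mu> {0..1} + measure \<mu> (Aout 0)"
    by (rule measure_Un_le) (auto simp: sets_mu)
  finally have "1 \<le> measure \<mu> {0..1}" using Aout_zero by simp
  then show ?thesis using prob_le_1 antisym by blast
qed

lemma term_eq: assumes "0 \<le> y" "y \<le> 1" "a < N"
  shows "measure \<mu> {- real d .. real a + y - real d} =
     (if d < a then 1 else 0) + (if d = a then cdf_of \<mu> y else 0)"
proof -
  interpret prob_space \<mu> by (rule ps)
  consider "d < a" | "d = a" | "a < d" by linarith
  then show ?thesis
  proof cases
    case 1
    then have "{0..1} \<subseteq> {- real d .. real a + y - real d}" using assms by auto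
    then have "measure \<mu> {0..1} \<le> measure \<mu> {- real d .. real a + y - real d}"
      by (intro finite_measure_mono) (auto simp: sets_mu)
    then have "1 \<le> measure \<mu> {- real d .. real a + y - real d}" using mu01 by simp
    then show ?thesis using 1 prob_le_1 antisym by auto
  next
    case 2
    have "measure \<mu> {- real d .. real a + y - real d} \<le> measure \<mu> ({0..y} \<union> Aout 0)"
      by (rule finite_measure_mono) (auto simp: Aout_def sets_mu 2)
    also have "\<dots> \<le> measure \<mu> {0..y} + measure \<mu> (Aout 0)"
      by (rule measure_Un_le) (auto simp: sets_mu)
    finally have le: "measure \<mu> {- real d .. real a + y - real d} \<le> measure \<mu> {0..y}" using Aout_zero by simp
    have "measure \<mu> {0..y} \<le> measure \<mu> {- real d .. real a + y - real d}"
      by (rule finite_measure_mono) (auto simp: sets_mu 2)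
    then show ?thesis using le 2 by (simp add: cdf_of_def)
  next
    case 3
    have "measure \<mu> {- real d .. real a + y - real d} \<le> measure \<mu> ({0} \<union> Aout 0)"
      by (rule finite_measure_mono) (use 3 assms in \<open>auto simp: Aout_def sets_mu\<close>)
    also have "\<dots> \<le> measure \<mu> {0} + measure \<mu> (Aout 0)"
      by (rule measure_Un_le) (auto simp: sets_mu)
    finally have "measure \<mu> {- real d .. real a + y - real d} \<le> 0" using Aout_zero mu_sing0 by simp
    moreover have "0 \<le> measure \<mu> {- real d .. real a + y - real d}" by (rule measure_nonneg)
    ultimately show ?thesis using 3 by simp
  qed
qed

lemma cdf_rec: assumes "0 \<le> y" "y \<le> 1" "a < N"
  shows "cdf_of \<mu> ((real a + y) / real N) =
     (real (cum_digit b a) + real (b a) * cdf_of \<mu> y) / real (digit_norm N b)"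
proof -
  have Np: "real N > 0" using N3 by simp
  have pre: "phi N d -` {0..(real a + y) / real N} = {- real d .. real a + y - real d}" for d
  proof -
    have "phi N d z \<in> {0..(real a + y) / real N} \<longleftrightarrow> z \<in> {- real d .. real a + y - real d}" for z
      using Np by (simp add: phi_def divide_le_cancel divide_right_mono) (auto simp: divide_le_cancel zero_le_divide_iff)
    then show ?thesis by auto
  qed
  have "cdf_of \<mu> ((real a + y) / real N) =
     (1 / real (digit_norm N b)) * (\<Sum>d\<in>digit_set N b. measure \<mu> (phi N d -` {0..(real a + y) / real N}))"
    unfolding cdf_of_def by (rule ss_eq) simp
  also have "(\<Sum>d\<in>digit_set N b. measure \<mu> (phi N d -` {0..(real a + y) / real N}))
     = (\<Sum>d\<in>digit_set N b. (if d < a then 1 else 0) + (if d = a then cdf_of \<mu> y else 0))"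
    unfolding pre using term_eq[OF assms] by simp
  also have "\<dots> = real (cum_digit b a) + real (b a) * cdf_of \<mu> y"
    using cum_card[of a] b_ind[of a] assms finD by (simp add: sum.distrib sum.delta)
  finally show ?thesis by simp
qed

end

definition tail :: "nat \<Rightarrow> (nat \<Rightarrow> nat) \<Rightarrow> nat \<Rightarrow> real" where
  "tail N n k = (\<Sum>i. real (n (i + k + 1)) / real N ^ (i + 1))"

lemma geo_one: assumes "(2::nat) \<le> N" shows "(\<lambda>i. (real N - 1) / real N ^ (i + 1)) sums 1"
proof -
  have Np: "real N \<ge> 2" using assms by simp
  have "(\<lambda>i. (1 / real N) ^ i) sums (1 / (1 - 1 / real N))"
    by (rule geometric_sums) (use Np in simp)
  then have "(\<lambda>i. ((real N - 1) / real N) * (1 / real N) ^ i) sums (((real N - 1) / real N) * (1 / (1 - 1 / real N)))"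
    by (rule sums_mult)
  moreover have "((real N - 1) / real N) * (1 / (1 - 1 / real N)) = 1" using Np by (simp add: field_simps)
  moreover have "(\<lambda>i. ((real N - 1) / real N) * (1 / real N) ^ i) = (\<lambda>i. (real N - 1) / real N ^ (i + 1))"
    by (auto simp: power_divide)
  ultimately show ?thesis using assms by (simp del: power_Suc)
qed

lemma tail_props: assumes "(2::nat) \<le> N" "\<And>i. 1 \<le> i \<Longrightarrow> n i < N"
  shows "summable (\<lambda>i. real (n (i + k + 1)) / real N ^ (i + 1))"
    and "0 \<le> tail N n k" and "tail N n k \<le> 1"
    and "tail N n k = (real (n (k + 1)) + tail N n (k + 1)) / real N"
proof -
  have Np: "real N \<ge> 2" using assms by simp
  have le: "real (n (i + k + 1)) / real N ^ (i + 1) \<le> (real N - 1) / real N ^ (i + 1)" for i k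
  proof -
    have "n (i + k + 1) < N" using assms(2) by simp
    then have "real (n (i + k + 1)) \<le> real N - 1" by linarith
    then show ?thesis using Np by (simp add: divide_right_mono)
  qed
  have sg: "summable (\<lambda>i. (real N - 1) / real N ^ (i + 1))" using geo_one[OF assms(1)] sums_summable by blast
  have sm: "summable (\<lambda>i. real (n (i + k + 1)) / real N ^ (i + 1))" for k
    by (rule summable_comparison_test[OF _ sg]) (use le in auto)
  show "summable (\<lambda>i. real (n (i + k + 1)) / real N ^ (i + 1))" by (rule sm)
  show "0 \<le> tail N n k" unfolding tail_def by (rule suminf_nonneg[OF sm]) simp
  have "tail N n k \<le> (\<Sum>i. (real N - 1) / real N ^ (i + 1))"
    unfolding tail_def by (rule suminf_le[OF _ sm sg]) (use le in auto)
  then show "tail N n k \<le> 1" using sums_unique[OF geo_one[OF assms(1)]] by simp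
  have "(\<Sum>i. real (n (Suc i + k + 1)) / real N ^ (Suc i + 1)) =
        tail N n k - real (n (k + 1)) / real N"
    unfolding tail_def using suminf_split_head[OF sm[of k]] by simp
  moreover have "(\<lambda>i. real (n (Suc i + k + 1)) / real N ^ (Suc i + 1)) =
        (\<lambda>i. (real (n (i + (k + 1) + 1)) / real N ^ (i + 1)) / real N)"
    by (auto simp: field_simps)
  moreover have "(\<Sum>i. (real (n (i + (k + 1) + 1)) / real N ^ (i + 1)) / real N) = tail N n (k + 1) / real N"
    unfolding tail_def by (rule suminf_divide[OF sm])
  ultimately have "tail N n k - real (n (k + 1)) / real N = tail N n (k + 1) / real N" by simp
  then show "tail N n k = (real (n (k + 1)) + tail N n (k + 1)) / real N"
    by (simp add: add_divide_distrib)
qed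

theorem proposition2p3:
  fixes N :: nat and b :: "nat \<Rightarrow> nat" and \<mu> :: "real measure"
    and x :: real and n :: "nat \<Rightarrow> nat"
  assumes "digit_vector N b"
    and "self_similar_measure N b \<mu>"
    and "0 < x" and "x < 1"
    and "\<And>i. 1 \<le> i \<Longrightarrow> n i < N"
    and "x = (\<Sum>i. real (n (i + 1)) / real N ^ (i + 1))"
  shows "cdf_of \<mu> x =
    (\<Sum>i. (\<Prod>k=1..i. real (b (n k))) * real (cum_digit b (n (i + 1)))
            / real (digit_norm N b) ^ (i + 1))"
proof -
  note dv = assms(1) and ss = assms(2)
  interpret prob_space \<mu> using ps[OF dv ss] .
  define m where "m = real (digit_norm N b)"
  define P where "P i = (\<Prod>k=1..i. real (b (n k)))" for i
  define f where "f i = (\<Prod>k=1..i. real (b (n k))) * real (cum_digit b (n (i + 1)))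
            / real (digit_norm N b) ^ (i + 1)" for i
  define F where "F = cdf_of \<mu>"
  define t where "t = tail N n"
  have N2: "(2::nat) \<le> N" using N3[OF dv ss] by simp
  have m2: "m \<ge> 2" using m2[OF dv ss] by (simp add: m_def)
  have t0: "x = t 0" using assms(6) by (simp add: t_def tail_def)
  have tb1: "0 \<le> t k" for k unfolding t_def by (rule tail_props(2)[OF N2 assms(5)])
  have tb2: "t k \<le> 1" for k unfolding t_def by (rule tail_props(3)[OF N2 assms(5)])
  note tb = tb1 tb2
  have tr: "t k = (real (n (k + 1)) + t (k + 1)) / real N" for k
    unfolding t_def by (rule tail_props(4)[OF N2 assms(5)])
  have Fb: "0 \<le> F y" "F y \<le> 1" for y by (auto simp: F_def cdf_of_def)
  have bn: "b (n k) \<in> {0,1}" if "1 \<le> k" for k using bvals[OF dv ss assms(5)[OF that]] .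
  have Pb: "0 \<le> P K \<and> P K \<le> 1" for K
  proof -
    have h: "0 \<le> real (b (n k)) \<and> real (b (n k)) \<le> 1" if "k \<in> {1..K}" for k
      using bn[of k] that by auto
    have "0 \<le> (\<Prod>k=1..K. real (b (n k)))" using h by (intro prod_nonneg) blast
    moreover have "(\<Prod>k=1..K. real (b (n k))) \<le> 1" using h by (intro prod_le_1) blast
    ultimately show ?thesis unfolding P_def by blast
  qed
  have iter: "F x = (\<Sum>i<K. f i) + P K / m ^ K * F (t K)" for K
  proof (induction K)
    case 0 then show ?case by (simp add: P_def t0)
  next
    case (Suc K)
    have "F (t K) = (real (cum_digit b (n (K + 1))) + real (b (n (K + 1))) * F (t (K + 1))) / m"
      unfolding F_def m_def tr[of K] by (rule cdf_rec[OF dv ss tb assms(5)]) simp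
    moreover have "P (Suc K) = P K * real (b (n (Suc K)))" unfolding P_def
      by (simp add: prod.nat_ivl_Suc')
    moreover have "f K = P K * real (cum_digit b (n (K + 1))) / m ^ (K + 1)"
      by (simp add: f_def P_def m_def)
    moreover have "P K / m ^ K * ((real (cum_digit b (n (K + 1))) + real (b (n (K + 1))) * F (t (K + 1))) / m)
       = P K * real (cum_digit b (n (K + 1))) / m ^ (K + 1) + P K * real (b (n (Suc K))) / m ^ (Suc K) * F (t (Suc K))"
      using m2 by (simp add: field_simps)
    ultimately show ?case using Suc.IH by simp
  qed
  have r0: "(\<lambda>K. P K / m ^ K * F (t K)) \<longlonglongrightarrow> 0"
  proof (rule Lim_null_comparison)
    show "\<forall>\<^sub>F K in sequentially. norm (P K / m ^ K * F (t K)) \<le> (1 / m) ^ K"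
    proof (intro always_eventually allI)
      fix K
      have "norm (P K / m ^ K * F (t K)) = P K * F (t K) / m ^ K" using Pb Fb m2 by simp
      also have "\<dots> \<le> 1 / m ^ K" using conjunct1[OF Pb[of K]] conjunct2[OF Pb[of K]] Fb[of "t K"] m2
        by (intro divide_right_mono) (auto intro: mult_le_one)
      finally show "norm (P K / m ^ K * F (t K)) \<le> (1 / m) ^ K" by (simp add: power_divide)
    qed
    show "(\<lambda>K. (1 / m) ^ K) \<longlonglongrightarrow> 0" by (rule LIMSEQ_power_zero) (use m2 in simp)
  qed
  have "(\<lambda>K. \<Sum>i<K. f i) = (\<lambda>K. F x - P K / m ^ K * F (t K))" using iter by (auto simp: algebra_simps)
  moreover have "(\<lambda>K. F x - P K / m ^ K * F (t K)) \<longlonglongrightarrow> F x - 0"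
    by (intro tendsto_diff tendsto_const r0)
  ultimately have "f sums F x" unfolding sums_def by simp
  then show ?thesis unfolding F_def f_def by (simp add: sums_unique)
qed


end
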